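(* Assume that for every $\Phi\in\mathcal F_\Phi\setminus\mathcal I^*_\Phi$, \[ \max_{e,e'\in\mathcal{E}_{tr}} \sup_{u\in\mathcal{F}_{w}}|\mathbb{E}[ u\circ\Phi(\bm{x}^e)\,y^e]-\mathbb{E}[ u\circ\Phi(\bm{x}^{e'})\,y^{e'}]|>0 \ \text{ or }\ \max_{e,e'\in\mathcal{E}_{tr}}\sup_{u\in\mathcal{F}_{w}}|\mathbb{E}[\{ u\circ\Phi(\bm{x}^e)\}^2]-\mathbb{E}[\{ u\circ\Phi(\bm{x}^{e'})\}^2]|>0 . \] Then the feasible set of the FAIRM program (the set of $\Phi\in\mathcal F_\Phi$ satisfying the FAIRM constraints over $\mathcal E_{tr}$) equals $\mathcal I^*_\Phi$. If moreover $\mathcal I^*_\Phi\neq\emptyset$, then $w^{(\mathrm{FAIRM})}\circ\Phi^{(\mathrm{FAIRM})}=w^*\circ\Phi^*$.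
   Context: Let $\mathcal E_{all}$ be a finite set of environments and $\mathcal E_{tr}\subseteq\mathcal E_{all}$ the training environments; for each $e$, $(\bm x^e,y^e)\in\mathbb R^p\times\mathbb R$ has distribution $P^e$. Environment weights: $\alpha^*_e>0$ for $e\in\mathcal E_{all}$ (summing to one), and for training environments $\alpha_e=n_e/N_{tr}$ with $n_e$ the training sample size of $e$ and $N_{tr}=\sum_{e\in\mathcal E_{tr}}n_e$. $\mathcal F_\Phi$ is a class of representations $\Phi:\mathbb R^p\to\mathcal H$, $\mathcal F_w$ a class of functions $\mathcal H\to\mathbb R$. $\mathcal I^*_\Phi$ is the set of $\Phi\in\mathcal F_\Phi$ with $\max_{e,e'\in\mathcal E_{all}}\sup_{u\in\mathcal F_w}|\mathbb E[u\circ\Phi(\bm x^e)y^e]-\mathbb E[u\circ\Phi(\bm x^{e'})y^{e'}]|=0$ and $\max_{e,e'\in\mathcal E_{all}}\sup_{u\in\mathcal F_w}|\mathbb E[\{u\circ\Phi(\bm x^e)\}^2]-\mathbb E[\{u\circ\Phi(\bm x^{e'})\}^2]|=0$. Full-info FAIRM: $(w^*,\Phi^* )\in\arg\min_{w\in\mathcal F_w,\Phi\in\mathcal I^*_\Phi}\sum_{e\in\mathcal E_{all}}\alpha^*_e\mathbb E[(y^e-w\circ\Phi(\bm x^e))^2]$. FAIRM: $(w^{(\mathrm{FAIRM})},\Phi^{(\mathrm{FAIRM})})\in\arg\min_{w\in\mathcal F_w,\Phi\in\mathcal F_\Phi}\sum_{e\in\mathcal E_{tr}}\alpha_e\mathbb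 E[(y^e-w\circ\Phi(\bm x^e))^2]$ subject to $\max_{e,e'\in\mathcal E_{tr}}\sup_{u\in\mathcal F_w}|\mathbb E[u\circ\Phi(\bm x^e)y^e]-\mathbb E[u\circ\Phi(\bm x^{e'})y^{e'}]|=0$ and $\max_{e,e'\in\mathcal E_{tr}}\sup_{u\in\mathcal F_w}|\mathbb E[\{u\circ\Phi(\bm x^e)\}^2]-\mathbb E[\{u\circ\Phi(\bm x^{e'})\}^2]|=0$. *)

theory Defs
  imports "HOL-Probability.Probability"
begin

text \<open>Environments have an abstract type 'e; the data (x^e, y^e) of environment e
  has distribution P e on R^p x R (x ranges over real^'p).\<close>

definition cross_mom :: "('e \<Rightarrow> ((real^'p) \<times> real) measure) \<Rightarrow> (real^'p \<Rightarrow> 'h) \<Rightarrow> ('h \<Rightarrow> real) \<Rightarrow> 'e \<Rightarrow> real" where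
  "cross_mom P Phi u e = (\<integral>z. u (Phi (fst z)) * snd z \<partial>(P e))"

definition sq_mom :: "('e \<Rightarrow> ((real^'p) \<times> real) measure) \<Rightarrow> (real^'p \<Rightarrow> 'h) \<Rightarrow> ('h \<Rightarrow> real) \<Rightarrow> 'e \<Rightarrow> real" where
  "sq_mom P Phi u e = (\<integral>z. (u (Phi (fst z)))\<^sup>2 \<partial>(P e))"

definition disc_cross :: "('e \<Rightarrow> ((real^'p) \<times> real) measure) \<Rightarrow> ('h \<Rightarrow> real) set \<Rightarrow> 'e set \<Rightarrow> (real^'p \<Rightarrow> 'h) \<Rightarrow> ereal" where
  "disc_cross P Fw E Phi =
     Max ((\<lambda>(e, e'). SUP u\<in>Fw. ereal \<bar>cross_mom P Phi u e - cross_mom P Phi u e'\<bar>) ` (E \<times> E))"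

definition disc_sq :: "('e \<Rightarrow> ((real^'p) \<times> real) measure) \<Rightarrow> ('h \<Rightarrow> real) set \<Rightarrow> 'e set \<Rightarrow> (real^'p \<Rightarrow> 'h) \<Rightarrow> ereal" where
  "disc_sq P Fw E Phi =
     Max ((\<lambda>(e, e'). SUP u\<in>Fw. ereal \<bar>sq_mom P Phi u e - sq_mom P Phi u e'\<bar>) ` (E \<times> E))"

text \<open>Representations in FPhi satisfying the invariance constraints over the environments E.
  With E = E_all this is I*_Phi; with E = E_tr it is the FAIRM feasible set.\<close>
definition inv_set :: "('e \<Rightarrow> ((real^'p) \<times> real) measure) \<Rightarrow> ('h \<Rightarrow> real) set \<Rightarrow> (real^'p \<Rightarrow> 'h) set \<Rightarrow> 'e set \<Rightarrow> (real^'p \<Rightarrow> 'h) set" where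
  "inv_set P Fw FPhi E = {Phi \<in> FPhi. disc_cross P Fw E Phi = 0 \<and> disc_sq P Fw E Phi = 0}"

definition risk :: "('e \<Rightarrow> ((real^'p) \<times> real) measure) \<Rightarrow> 'e \<Rightarrow> (real^'p \<Rightarrow> real) \<Rightarrow> real" where
  "risk P e f = (\<integral>z. (snd z - f (fst z))\<^sup>2 \<partial>(P e))"

definition wargmin :: "('e \<Rightarrow> ((real^'p) \<times> real) measure) \<Rightarrow> ('h \<Rightarrow> real) set \<Rightarrow> (real^'p \<Rightarrow> 'h) set \<Rightarrow> 'e set \<Rightarrow> ('e \<Rightarrow> real) \<Rightarrow> (('h \<Rightarrow> real) \<times> (real^'p \<Rightarrow> 'h)) set" where
  "wargmin P Fw Feas E a =
     {(w, Phi). w \<in> Fw \<and> Phi \<in> Feas \<and>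
        (\<forall>w'\<in>Fw. \<forall>Phi'\<in>Feas.
           (\<Sum>e\<in>E. a e * risk P e (w \<circ> Phi)) \<le> (\<Sum>e\<in>E. a e * risk P e (w' \<circ> Phi')))}"

definition train_weight :: "('e \<Rightarrow> nat) \<Rightarrow> 'e set \<Rightarrow> 'e \<Rightarrow> real" where
  "train_weight n Etr e = real (n e) / real (\<Sum>e'\<in>Etr. n e')"

end

theory Submission
  imports Defs
begin

lemma disc_zero_eq:
  fixes f :: "'u \<Rightarrow> 'e \<Rightarrow> real"
  assumes "finite E" "e \<in> E" "e' \<in> E" "u \<in> Fw"
    and "Max ((\<lambda>(e, e'). SUP u\<in>Fw. ereal \<bar>f u e - f u e'\<bar>) ` (E \<times> E)) = 0"
  shows "f u e = f u e'"
proof -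
  have "(SUP u\<in>Fw. ereal \<bar>f u e - f u e'\<bar>) \<le> Max ((\<lambda>(e, e'). SUP u\<in>Fw. ereal \<bar>f u e - f u e'\<bar>) ` (E \<times> E))"
    by (rule Max_ge) (use assms in auto)
  moreover have "ereal \<bar>f u e - f u e'\<bar> \<le> (SUP u\<in>Fw. ereal \<bar>f u e - f u e'\<bar>)"
    by (rule SUP_upper) (use assms in auto)
  ultimately have "ereal \<bar>f u e - f u e'\<bar> \<le> 0" using assms(5) by (metis order_trans)
  then show ?thesis by (simp add: zero_ereal_def[symmetric])
qed

lemma disc_sub_zero:
  fixes f :: "'u \<Rightarrow> 'e \<Rightarrow> real"
  assumes "finite E" "E' \<subseteq> E" "E' \<noteq> {}" "Fw \<noteq> {}"
    and "Max ((\<lambda>(e, e'). SUP u\<in>Fw. ereal \<bar>f u e - f u e'\<bar>) ` (E \<times> E)) = 0"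
  shows "Max ((\<lambda>(e, e'). SUP u\<in>Fw. ereal \<bar>f u e - f u e'\<bar>) ` (E' \<times> E')) = 0"
proof -
  let ?g = "(\<lambda>(e, e'). SUP u\<in>Fw. ereal \<bar>f u e - f u e'\<bar>)"
  have finE': "finite E'" using assms finite_subset by blast
  have ne: "?g ` (E' \<times> E') \<noteq> {}" using assms(3) by auto
  have le: "Max (?g ` (E' \<times> E')) \<le> Max (?g ` (E \<times> E))"
    by (rule Max_mono) (use assms finE' ne in auto)
  obtain e where e: "e \<in> E'" using assms(3) by auto
  obtain u where u: "u \<in> Fw" using assms(4) by auto
  have "0 \<le> ?g (e, e)"
  proof -
    have "ereal \<bar>f u e - f u e\<bar> \<le> (SUP u\<in>Fw. ereal \<bar>f u e - f u e\<bar>)"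
      by (rule SUP_upper) (use u in auto)
    then show ?thesis by (simp add: zero_ereal_def)
  qed
  also have "?g (e, e) \<le> Max (?g ` (E' \<times> E'))"
    by (rule Max_ge[OF finite_imageI imageI]) (use finE' e in auto)
  finally show ?thesis using le assms(5) by simp
qed

lemma sqexp: "((a::real) - b)\<^sup>2 = a\<^sup>2 - 2 * (b * a) + b\<^sup>2"
  by (simp add: power2_eq_square algebra_simps)

theorem proposition2:
  fixes P :: "'e \<Rightarrow> ((real^'p) \<times> real) measure"
    and Eall Etr :: "'e set"
    and astar :: "'e \<Rightarrow> real"
    and n :: "'e \<Rightarrow> nat"
    and FPhi :: "(real^'p \<Rightarrow> 'h) set"
    and Fw :: "('h \<Rightarrow> real) set"
  assumes fin: "finite Eall"
    and sub: "Etr \<subseteq> Eall"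
    and Etr_ne: "Etr \<noteq> {}"
    and Fw_ne: "Fw \<noteq> {}"
    and prob: "\<And>e. e \<in> Eall \<Longrightarrow> prob_space (P e)"
    and astar_pos: "\<And>e. e \<in> Eall \<Longrightarrow> astar e > 0"
    and astar_sum: "(\<Sum>e\<in>Eall. astar e) = 1"
    and n_pos: "\<And>e. e \<in> Etr \<Longrightarrow> n e > 0"
    and int_y2: "\<And>e. e \<in> Eall \<Longrightarrow> integrable (P e) (\<lambda>z. (snd z)\<^sup>2)"
    and int_uy: "\<And>e Phi u. e \<in> Eall \<Longrightarrow> Phi \<in> FPhi \<Longrightarrow> u \<in> Fw \<Longrightarrow>
                   integrable (P e) (\<lambda>z. u (Phi (fst z)) * snd z)"
    and int_u2: "\<And>e Phi u. e \<in> Eall \<Longrightarrow> Phi \<in> FPhi \<Longrightarrow> u \<in> Fw \<Longrightarrow>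
                   integrable (P e) (\<lambda>z. (u (Phi (fst z)))\<^sup>2)"
    and ident: "\<And>Phi. Phi \<in> FPhi - inv_set P Fw FPhi Eall \<Longrightarrow>
                   disc_cross P Fw Etr Phi > 0 \<or> disc_sq P Fw Etr Phi > 0"
  shows "inv_set P Fw FPhi Etr = inv_set P Fw FPhi Eall \<and>
         (inv_set P Fw FPhi Eall \<noteq> {} \<longrightarrow>
            wargmin P Fw (inv_set P Fw FPhi Etr) Etr (train_weight n Etr)
              = wargmin P Fw (inv_set P Fw FPhi Eall) Eall astar)"
proof -
  have finEtr: "finite Etr" using fin sub finite_subset by blast
  let ?I = "inv_set P Fw FPhi Eall"
  have eqI: "inv_set P Fw FPhi Etr = ?I"
  proof
    show "?I \<subseteq> inv_set P Fw FPhi Etr"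
    proof
      fix Phi assume "Phi \<in> ?I"
      then have "Phi \<in> FPhi" "disc_cross P Fw Eall Phi = 0" "disc_sq P Fw Eall Phi = 0"
        unfolding inv_set_def by auto
      then show "Phi \<in> inv_set P Fw FPhi Etr"
        unfolding inv_set_def disc_cross_def disc_sq_def
        using disc_sub_zero[OF fin sub Etr_ne Fw_ne, of "\<lambda>u e. cross_mom P Phi u e"]
              disc_sub_zero[OF fin sub Etr_ne Fw_ne, of "\<lambda>u e. sq_mom P Phi u e"]
        by simp
    qed
  next
    show "inv_set P Fw FPhi Etr \<subseteq> ?I"
    proof
      fix Phi assume A: "Phi \<in> inv_set P Fw FPhi Etr"
      show "Phi \<in> ?I"
      proof (rule ccontr)
        assume "Phi \<notin> ?I"
        with A have "Phi \<in> FPhi - ?I" unfolding inv_set_def by auto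
        from ident[OF this] A show False unfolding inv_set_def by auto
      qed
    qed
  qed
  have inv_cross: "cross_mom P Phi u e = cross_mom P Phi u e'"
    if "Phi \<in> ?I" "u \<in> Fw" "e \<in> Eall" "e' \<in> Eall" for Phi u e e'
    using that disc_zero_eq[OF fin that(3,4) that(2), of "\<lambda>u e. cross_mom P Phi u e"]
    unfolding inv_set_def disc_cross_def by simp
  have inv_sq: "sq_mom P Phi u e = sq_mom P Phi u e'"
    if "Phi \<in> ?I" "u \<in> Fw" "e \<in> Eall" "e' \<in> Eall" for Phi u e e'
    using that disc_zero_eq[OF fin that(3,4) that(2), of "\<lambda>u e. sq_mom P Phi u e"]
    unfolding inv_set_def disc_sq_def by simp
  obtain e0 where e0: "e0 \<in> Etr" using Etr_ne by auto
  hence e0a: "e0 \<in> Eall" using sub by auto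
  define Y where "Y e = (\<integral>z. (snd z)\<^sup>2 \<partial>(P e))" for e
  define g :: "('h \<Rightarrow> real) \<Rightarrow> (real^'p \<Rightarrow> 'h) \<Rightarrow> real" where "g w Phi = - 2 * cross_mom P Phi w e0 + sq_mom P Phi w e0" for w Phi
  have risk_eq: "risk P e (w \<circ> Phi) = Y e + g w Phi"
    if "Phi \<in> ?I" "w \<in> Fw" "e \<in> Eall" for Phi w e
  proof -
    have PhiF: "Phi \<in> FPhi" using that(1) unfolding inv_set_def by auto
    have "risk P e (w \<circ> Phi) = (\<integral>z. (snd z)\<^sup>2 - 2 * (w (Phi (fst z)) * snd z) + (w (Phi (fst z)))\<^sup>2 \<partial>(P e))"
      unfolding risk_def by (rule Bochner_Integration.integral_cong) (simp_all add: sqexp)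
    also have "\<dots> = Y e - 2 * cross_mom P Phi w e + sq_mom P Phi w e"
      unfolding Y_def cross_mom_def sq_mom_def
      using int_y2[OF that(3)] int_uy[OF that(3) PhiF that(2)] int_u2[OF that(3) PhiF that(2)]
      by simp
    also have "\<dots> = Y e + g w Phi"
      unfolding g_def using inv_cross[OF that(1,2,3) e0a] inv_sq[OF that(1,2,3) e0a] by simp
    finally show ?thesis .
  qed
  have tw_sum: "(\<Sum>e\<in>Etr. train_weight n Etr e) = 1"
  proof -
    have "n e0 \<le> (\<Sum>e'\<in>Etr. n e')"
      by (rule member_le_sum) (use e0 finEtr in auto)
    then have pos: "real (\<Sum>e'\<in>Etr. n e') \<noteq> 0" using n_pos[OF e0] by linarith
    have "(\<Sum>e\<in>Etr. train_weight n Etr e) = (\<Sum>e\<in>Etr. real (n e)) / real (\<Sum>e'\<in>Etr. n e')"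
      unfolding train_weight_def by (rule sum_divide_distrib[symmetric])
    also have "\<dots> = 1" using pos by (simp only: of_nat_sum[symmetric]) simp
    finally show ?thesis .
  qed
  have obj: "(\<Sum>e\<in>E. a e * risk P e (w \<circ> Phi)) = (\<Sum>e\<in>E. a e * Y e) + g w Phi"
    if "Phi \<in> ?I" "w \<in> Fw" "E \<subseteq> Eall" "(\<Sum>e\<in>E. a e) = 1" for Phi w and E :: "'e set" and a :: "'e \<Rightarrow> real"
  proof -
    have "(\<Sum>e\<in>E. a e * risk P e (w \<circ> Phi)) = (\<Sum>e\<in>E. a e * Y e + a e * g w Phi)"
          proof (rule sum.cong[OF refl])
      fix e assume "e \<in> E"
      then have "e \<in> Eall" using that(3) by blast
      then show "a e * risk P e (w \<circ> Phi) = a e * Y e + a e * g w Phi"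
        using risk_eq[OF that(1,2)] by (simp add: distrib_left)
    qed
    also have "\<dots> = (\<Sum>e\<in>E. a e * Y e) + (\<Sum>e\<in>E. a e) * g w Phi"
      by (simp add: sum.distrib sum_distrib_right)
    finally show ?thesis using that(4) by simp
  qed
  have objtr: "(\<Sum>e\<in>Etr. train_weight n Etr e * risk P e (w \<circ> Phi)) = (\<Sum>e\<in>Etr. train_weight n Etr e * Y e) + g w Phi"
    if "Phi \<in> ?I" "w \<in> Fw" for Phi w
    using obj[OF that sub tw_sum] .
  have objall: "(\<Sum>e\<in>Eall. astar e * risk P e (w \<circ> Phi)) = (\<Sum>e\<in>Eall. astar e * Y e) + g w Phi"
    if "Phi \<in> ?I" "w \<in> Fw" for Phi w
    using obj[OF that _ astar_sum] by simp
  have "wargmin P Fw ?I Etr (train_weight n Etr) = wargmin P Fw ?I Eall astar"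
  proof -
    let ?Ktr = "(\<Sum>e\<in>Etr. train_weight n Etr e * Y e)"
    let ?Kall = "(\<Sum>e\<in>Eall. astar e * Y e)"
    have "(\<forall>w'\<in>Fw. \<forall>Phi'\<in>?I. (\<Sum>e\<in>Etr. train_weight n Etr e * risk P e (w \<circ> Phi)) \<le> (\<Sum>e\<in>Etr. train_weight n Etr e * risk P e (w' \<circ> Phi')))
      \<longleftrightarrow> (\<forall>w'\<in>Fw. \<forall>Phi'\<in>?I. (\<Sum>e\<in>Eall. astar e * risk P e (w \<circ> Phi)) \<le> (\<Sum>e\<in>Eall. astar e * risk P e (w' \<circ> Phi')))"
      if "w \<in> Fw" "Phi \<in> ?I" for w Phi
    proof -
      have "(\<Sum>e\<in>Etr. train_weight n Etr e * risk P e (w \<circ> Phi)) \<le> (\<Sum>e\<in>Etr. train_weight n Etr e * risk P e (w' \<circ> Phi'))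
        \<longleftrightarrow> (\<Sum>e\<in>Eall. astar e * risk P e (w \<circ> Phi)) \<le> (\<Sum>e\<in>Eall. astar e * risk P e (w' \<circ> Phi'))"
        if "w' \<in> Fw" "Phi' \<in> ?I" for w' Phi'
      proof -
        have "(\<Sum>e\<in>Etr. train_weight n Etr e * risk P e (w \<circ> Phi)) \<le> (\<Sum>e\<in>Etr. train_weight n Etr e * risk P e (w' \<circ> Phi'))
          \<longleftrightarrow> g w Phi \<le> g w' Phi'"
          by (simp only: objtr[OF \<open>Phi \<in> ?I\<close> \<open>w \<in> Fw\<close>] objtr[OF that(2,1)]) linarith
        moreover have "(\<Sum>e\<in>Eall. astar e * risk P e (w \<circ> Phi)) \<le> (\<Sum>e\<in>Eall. astar e * risk P e (w' \<circ> Phi'))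
          \<longleftrightarrow> g w Phi \<le> g w' Phi'"
          by (simp only: objall[OF \<open>Phi \<in> ?I\<close> \<open>w \<in> Fw\<close>] objall[OF that(2,1)]) linarith
        ultimately show ?thesis by blast
      qed
      then show ?thesis by blast
    qed
    then show ?thesis unfolding wargmin_def by blast
  qed
  then show ?thesis using eqI by simp
qed

end
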